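(* Let $M=N=2$, let $\lambda_1,\lambda_2>0$ with $\lambda_1+\lambda_2<1$, let $\beta_1>\beta_2>0$, and let $D_1(\gamma)=D_2(\gamma)=1/(1-\gamma)$ for $\gamma\in[0,1)$ (two identical $M/M/1$ queues of unit service rate). Writing $p_1=p_{11}$, $p_2=p_{21}$, $\gamma_1=\lambda_1p_1+\lambda_2p_2$, $\gamma_2=\lambda_1(1-p_1)+\lambda_2(1-p_2)$, the function $U(p_1,p_2)=\beta_1\lambda_1\bigl(p_1D_1(\gamma_1)+(1-p_1)D_2(\gamma_2)\bigr)+\beta_2\lambda_2\bigl(p_2D_1(\gamma_1)+(1-p_2)D_2(\gamma_2)\bigr)$ is not convex on $[0,1]^2$. Consequently, the social cost minimization problem $\min_P U(P)$ over right stochastic matrices is in general not a convex optimization problem.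
   Context: Here $p_{ij}$ is the probability that a class-$i$ customer (Poisson arrivals of rate $\lambda_i$, delay sensitivity $\beta_i$) is routed to queue $j$, and $D_j(\gamma)$ is the mean sojourn time at queue $j$ when its arrival rate is $\gamma$. *)

theory Defs
  imports "HOL-Analysis.Analysis"
begin

definition D :: "real \<Rightarrow> real" where
  "D g = 1 / (1 - g)"

definition U :: "real \<Rightarrow> real \<Rightarrow> real \<Rightarrow> real \<Rightarrow> real \<Rightarrow> real \<Rightarrow> real" where
  "U l1 l2 b1 b2 p1 p2 =
     (let g1 = l1 * p1 + l2 * p2;
          g2 = l1 * (1 - p1) + l2 * (1 - p2)
      in b1 * l1 * (p1 * D g1 + (1 - p1) * D g2)
       + b2 * l2 * (p2 * D g1 + (1 - p2) * D g2))"

end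

theory Submission
  imports Defs
begin

lemma U_alt: "U l1 l2 b1 b2 p1 p2 =
   D (l1 * p1 + l2 * p2) * (b1*l1*p1 + b2*l2*p2)
 + D (l1 * (1 - p1) + l2 * (1 - p2)) * (b1*l1*(1-p1) + b2*l2*(1-p2))"
  unfolding U_def Let_def by (simp add: algebra_simps)

theorem mainTheorem3:
  fixes l1 l2 b1 b2 :: real
  assumes "l1 > 0" and "l2 > 0" and "l1 + l2 < 1"
      and "b1 > b2" and "b2 > 0"
  shows "\<not> convex_on ({0..1} \<times> {0..1}) (\<lambda>(p1, p2). U l1 l2 b1 b2 p1 p2)"
proof
  assume cv: "convex_on ({0..1} \<times> {0..1}) (\<lambda>(p1, p2). U l1 l2 b1 b2 p1 p2)"
  define K where "K = b1*l1 + b2*l2"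
  define s where "s = 1 - (l1+l2)/2"
  define r where "r = l1*l2/4"
  define d where "d = (b1-b2)*r/(2*(b2+K))"
  define a where "a = b1*r - b2*(r+d)"
  have s: "s > 1/2" "s < 1" using assms by (auto simp: s_def)
  have K: "K > 0" "K > (b1-b2)*l1" using assms
    by (auto simp: K_def algebra_simps intro!: add_pos_pos mult_pos_pos)
  have l12: "l1 < 1" "l2 < 1" using assms by linarith+
  have r0: "r > 0" using assms by (simp add: r_def)
  have "l1*l2 \<le> l1*1" using assms l12 by (intro mult_left_mono) auto
  moreover have "l1*l2 \<le> 1*l2" using assms l12 by (intro mult_right_mono) auto
  ultimately have r: "r > 0" "r \<le> l1/4" "r \<le> l2/4" using r0 by (auto simp: r_def)
  have d: "d > 0" using assms K r by (auto simp: d_def intro!: divide_pos_pos mult_pos_pos)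
  have "d \<le> (b1-b2)*r/(2*K)" unfolding d_def using assms K r
    by (intro divide_left_mono mult_nonneg_nonneg) auto
  also have "\<dots> \<le> r/(2*l1)"
  proof -
    have "((b1-b2)*l1)*r \<le> K*r" using K r by (intro mult_right_mono) auto
    then have "(b1-b2)*r*(2*l1) \<le> r*(2*K)" by (simp add: algebra_simps)
    then show ?thesis using K assms by (simp add: divide_simps mult_ac)
  qed
  also have "\<dots> = l2/8" using assms by (simp add: r_def)
  finally have d2: "d \<le> l2/8" .
  have ds: "d < s" using d2 s assms by linarith
  have hkey: "K*d < 2*a* s"
  proof -
    have "a = (b1-b2)*r - b2*d" by (simp add: a_def algebra_simps)
    also have "(b1-b2)*r = 2*(b2+K)*d" using K assms by (simp add: d_def)
    finally have "a = b2*d + 2*K*d" by (simp add: algebra_simps)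
    then have e: "a* s - K*d* s = (b2*d + K*d)* s" by (simp add: algebra_simps)
    have "(b2*d + K*d)* s > 0" using s d K assms by (intro mult_pos_pos add_pos_pos) auto
    with e have 1: "a* s - K*d* s > 0" by linarith
    have "K*d*(s - 1/2) > 0" using s d K by (intro mult_pos_pos) auto
    then have 2: "K*d* s - K*d/2 > 0" by (simp add: algebra_simps)
    from 1 2 show ?thesis by linarith
  qed
  define P where "P = (1/2 + r/l1, 1/2 - (r+d)/l2)"
  define Q where "Q = (1/2 - r/l1, 1/2 + (r+d)/l2)"
  have rl1: "r/l1 \<le> 1/4" and rl2: "(r+d)/l2 \<le> 1/2"
    using r d2 assms by (auto simp: field_simps)
  have rl1': "r/l1 \<ge> 0" "(r+d)/l2 \<ge> 0" using r d assms by auto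
  have PS: "P \<in> {0..1} \<times> {0..1}" and QS: "Q \<in> {0..1} \<times> {0..1}"
    unfolding P_def Q_def mem_Times_iff fst_conv snd_conv atLeastAtMost_iff
    using rl1 rl2 rl1' by (intro conjI; linarith)+
  have mid: "(1 - 1/2) *\<^sub>R P + (1/2) *\<^sub>R Q = (1/2, 1/2)"
    by (simp add: P_def Q_def field_simps)
  have cvi: "(\<lambda>(p1, p2). U l1 l2 b1 b2 p1 p2) ((1 - 1/2) *\<^sub>R P + (1/2) *\<^sub>R Q)
     \<le> (1 - 1/2) * (\<lambda>(p1, p2). U l1 l2 b1 b2 p1 p2) P + (1/2) * (\<lambda>(p1, p2). U l1 l2 b1 b2 p1 p2) Q"
    by (rule convex_onD[OF cv]) (use PS QS in auto)
  have ineq: "U l1 l2 b1 b2 (1/2) (1/2) \<le> (U l1 l2 b1 b2 (fst P) (snd P) + U l1 l2 b1 b2 (fst Q) (snd Q))/2"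
    using cvi unfolding mid by (simp add: case_prod_beta)
  have e1: "l1 * (1/2 + r/l1) + l2 * (1/2 - (r+d)/l2) = 1 - (s + d)"
    using assms by (simp add: s_def field_simps)
  have e2: "l1 * (1 - (1/2 + r/l1)) + l2 * (1 - (1/2 - (r+d)/l2)) = 1 - (s - d)"
    using assms by (simp add: s_def field_simps)
  have e3: "l1 * (1/2 - r/l1) + l2 * (1/2 + (r+d)/l2) = 1 - (s - d)"
    using assms by (simp add: s_def field_simps)
  have e4: "l1 * (1 - (1/2 - r/l1)) + l2 * (1 - (1/2 + (r+d)/l2)) = 1 - (s + d)"
    using assms by (simp add: s_def field_simps)
  have A1: "b1*l1*(1/2 + r/l1) + b2*l2*(1/2 - (r+d)/l2) = K/2 + a"
    using assms by (simp add: K_def a_def field_simps)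
  have A2: "b1*l1*(1 - (1/2 + r/l1)) + b2*l2*(1 - (1/2 - (r+d)/l2)) = K/2 - a"
    using assms by (simp add: K_def a_def field_simps)
  have A3: "b1*l1*(1/2 - r/l1) + b2*l2*(1/2 + (r+d)/l2) = K/2 - a"
    using assms by (simp add: K_def a_def field_simps)
  have A4: "b1*l1*(1 - (1/2 - r/l1)) + b2*l2*(1 - (1/2 + (r+d)/l2)) = K/2 + a"
    using assms by (simp add: K_def a_def field_simps)
  have UP: "U l1 l2 b1 b2 (fst P) (snd P) = (K/2+a)/(s+d) + (K/2-a)/(s-d)"
    unfolding U_alt P_def fst_conv snd_conv e1 e2 A1 A2 D_def by simp
  have UQ: "U l1 l2 b1 b2 (fst Q) (snd Q) = (K/2+a)/(s+d) + (K/2-a)/(s-d)"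
    unfolding U_alt Q_def fst_conv snd_conv e3 e4 A3 A4 D_def by simp
  have m1: "l1 * (1/2) + l2 * (1/2) = 1 - s" "l1 * (1 - 1/2) + l2 * (1 - 1/2) = 1 - s"
    by (simp_all add: s_def field_simps)
  have m2: "b1*l1*(1/2) + b2*l2*(1/2) = K/2" "b1*l1*(1 - 1/2) + b2*l2*(1 - 1/2) = K/2"
    by (simp_all add: K_def field_simps)
  have UM: "U l1 l2 b1 b2 (1/2) (1/2) = K/s"
    unfolding U_alt m1 m2 D_def by simp
  have "(s-d)*(s+d) > 0" using ds d s by (intro mult_pos_pos) auto
  then have pos: "s* s - d*d > 0" by (simp add: algebra_simps)
  have "(K/2+a)/(s+d) + (K/2-a)/(s-d) = (K* s - 2*a*d)/(s* s-d*d)"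
    using ds d s pos by (simp add: field_simps)
  also have "\<dots> < K/s"
  proof -
    
    have "(K* s - 2*a*d)* s < K*(s* s-d*d)"
    proof -
      have "d*(2*a* s - K*d) > 0" using hkey d by (intro mult_pos_pos) auto
      then show ?thesis by (simp add: algebra_simps)
    qed
    then show ?thesis using pos s by (simp add: field_simps)
  qed
  finally have lt: "(K/2+a)/(s+d) + (K/2-a)/(s-d) < K/s" .
  define X where "X = (K/2+a)/(s+d) + (K/2-a)/(s-d)"
  from ineq have "K/s \<le> (X + X)/2"
    by (simp only: UP UQ UM X_def)
  then have "K/s \<le> X" by simp
  then show False using lt unfolding X_def by simp
qed

end
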